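(* Let $Z$ be a random vector in $\mathbb{R}^d$ with a probability density $\mu_Z$ such that $\|Z\|$ is $\sqrt d\sigma_Z$-sub-Gaussian. Let $\overline{\alpha}=\inf\{\alpha:\mathbb{P}[\|Z\|\le\alpha]=1\}\in(0,\infty]$. For $\alpha\in(0,\overline\alpha)$ let $V\sim\mathrm{Uniform}[0,\alpha]$ be independent of $Z$ and define $U_\alpha=Z$ if $\|Z\|\le\alpha$ and $U_\alpha=\frac{Z}{\|Z\|}V$ otherwise, with distribution $\mu_{U_\alpha}$. Then \[ W_2(\mu_Z,\mu_{U_\alpha})\le\sqrt2\,(\alpha+\sqrt d\sigma_Z)\,e^{-\alpha^2/(2d\sigma_Z^2)}. \]
   Context: $W_2(\mu,\nu)=\inf\mathbb{E}^{1/2}\|U-V\|^2$ over couplings of $U\sim\mu$, $V\sim\nu$ is the second-order Wasserstein distance. A real random variable $A$ is $\sigma$-sub-Gaussian if $\inf\{t>0:\mathbb{E}\exp(A^2/t^2)\le2\}=\sigma<\infty$. *)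

theory Defs
  imports "HOL-Probability.Probability"
begin

text \<open>Sub-Gaussian (Orlicz psi_2) norm: inf of t > 0 with E exp(A^2/t^2) \<le> 2.\<close>
definition subgauss_set :: "'a measure \<Rightarrow> ('a \<Rightarrow> real) \<Rightarrow> real set" where
  "subgauss_set M A = {t. t > 0 \<and> (\<integral>\<^sup>+ x. ennreal (exp ((A x)\<^sup>2 / t\<^sup>2)) \<partial>M) \<le> 2}"

definition sub_gaussian :: "'a measure \<Rightarrow> ('a \<Rightarrow> real) \<Rightarrow> real \<Rightarrow> bool" where
  "sub_gaussian M A \<sigma> \<longleftrightarrow> subgauss_set M A \<noteq> {} \<and> Inf (subgauss_set M A) = \<sigma>"

definition couplings :: "'b measure \<Rightarrow> 'b measure \<Rightarrow> ('b \<times> 'b) measure set" where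
  "couplings \<mu> \<nu> = {\<pi>. prob_space \<pi> \<and> sets \<pi> = sets (\<mu> \<Otimes>\<^sub>M \<nu>)
      \<and> distr \<pi> \<mu> fst = \<mu> \<and> distr \<pi> \<nu> snd = \<nu>}"

definition W2_sq :: "('b::real_normed_vector) measure \<Rightarrow> 'b measure \<Rightarrow> ennreal" where
  "W2_sq \<mu> \<nu> = (INF \<pi>\<in>couplings \<mu> \<nu>. \<integral>\<^sup>+ p. ennreal ((norm (fst p - snd p))\<^sup>2) \<partial>\<pi>)"

definition W2 :: "('b::real_normed_vector) measure \<Rightarrow> 'b measure \<Rightarrow> ereal" where
  "W2 \<mu> \<nu> = (if W2_sq \<mu> \<nu> = \<top> then \<infinity> else ereal (sqrt (enn2real (W2_sq \<mu> \<nu>))))"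

definition alpha_bar :: "'a measure \<Rightarrow> ('a \<Rightarrow> 'b::real_normed_vector) \<Rightarrow> ereal" where
  "alpha_bar M Z = Inf {ereal a | a. measure M {x \<in> space M. norm (Z x) \<le> a} = 1}"

end

theory Submission
  imports Defs
begin

lemma key_ineq:
  fixes x a t :: real assumes "0 \<le> a" "a < x" "0 < t"
  shows "x\<^sup>2 \<le> (a+t)\<^sup>2 * exp(-(a\<^sup>2)/t\<^sup>2) * exp(x\<^sup>2/t\<^sup>2)"
proof -
  have e: "exp(-(a\<^sup>2)/t\<^sup>2) * exp(x\<^sup>2/t\<^sup>2) = exp((x\<^sup>2-a\<^sup>2)/t\<^sup>2)"
    by (simp add: exp_add[symmetric] diff_divide_distrib)
  have g: "1 + (x\<^sup>2-a\<^sup>2)/t\<^sup>2 \<le> exp((x\<^sup>2-a\<^sup>2)/t\<^sup>2)" by (rule exp_ge_add_one_self)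
  have ax: "a\<^sup>2 \<le> x\<^sup>2" using assms by (simp add: power_mono)
  have id: "(a+t)\<^sup>2 * (t\<^sup>2 + x\<^sup>2 - a\<^sup>2) - t\<^sup>2 * x\<^sup>2 = (x\<^sup>2-a\<^sup>2)*(a\<^sup>2+2*a*t) + 2*a*t^3 + t^4"
    by (simp add: power2_eq_square power3_eq_cube power4_eq_xxxx algebra_simps)
  have "0 \<le> (x\<^sup>2-a\<^sup>2)*(a\<^sup>2+2*a*t)" using ax assms by simp
  then have poly: "t\<^sup>2 * x\<^sup>2 \<le> (a+t)\<^sup>2 * (t\<^sup>2 + x\<^sup>2 - a\<^sup>2)" using id assms by (smt (verit) mult_nonneg_nonneg zero_le_power)
  have "1 + (x\<^sup>2-a\<^sup>2)/t\<^sup>2 = (t\<^sup>2 + x\<^sup>2 - a\<^sup>2)/t\<^sup>2" using assms by (simp add: field_simps)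
  then have "x\<^sup>2 \<le> (a+t)\<^sup>2 * (1 + (x\<^sup>2-a\<^sup>2)/t\<^sup>2)" using poly assms
    by (simp add: field_simps)
  also have "\<dots> \<le> (a+t)\<^sup>2 * exp((x\<^sup>2-a\<^sup>2)/t\<^sup>2)" using g by (simp add: mult_left_mono)
  finally show ?thesis using e by (simp add: mult.assoc)
qed

lemma coupling_lemma:
  fixes Z U :: "'a \<Rightarrow> real^'d"
  assumes "prob_space M" and [measurable]: "Z \<in> borel_measurable M" "U \<in> borel_measurable M"
  shows "distr M (borel \<Otimes>\<^sub>M borel) (\<lambda>x. (Z x, U x)) \<in> couplings (distr M borel Z) (distr M borel U)"
    unfolding couplings_def
proof (intro CollectI conjI)
  interpret P: prob_space M by fact
  have ZUm[measurable]: "(\<lambda>x. (Z x, U x)) \<in> measurable M (borel \<Otimes>\<^sub>M borel)" by simp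
    show "prob_space (distr M (borel \<Otimes>\<^sub>M borel) (\<lambda>x. (Z x, U x)))" by (rule P.prob_space_distr) simp
    show "sets (distr M (borel \<Otimes>\<^sub>M borel) (\<lambda>x. (Z x, U x))) = sets (distr M borel Z \<Otimes>\<^sub>M distr M borel U)"
    proof -
      have "sets (distr M borel Z \<Otimes>\<^sub>M distr M borel U) = sets (borel \<Otimes>\<^sub>M (borel :: (real^'d) measure))"
        by (rule sets_pair_measure_cong) simp_all
      then show ?thesis by simp
    qed
    have "distr (distr M (borel \<Otimes>\<^sub>M borel) (\<lambda>x. (Z x, U x))) (distr M borel Z) fst = distr M (distr M borel Z) (fst \<circ> (\<lambda>x. (Z x, U x)))"
      by (rule distr_distr) (simp_all add: measurable_cong_sets[OF refl sets_distr])
    also have "\<dots> = distr M borel Z" by (rule distr_cong) auto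
    finally show "distr (distr M (borel \<Otimes>\<^sub>M borel) (\<lambda>x. (Z x, U x))) (distr M borel Z) fst = distr M borel Z" .
    have "distr (distr M (borel \<Otimes>\<^sub>M borel) (\<lambda>x. (Z x, U x))) (distr M borel U) snd = distr M (distr M borel U) (snd \<circ> (\<lambda>x. (Z x, U x)))"
      by (rule distr_distr) (simp_all add: measurable_cong_sets[OF refl sets_distr])
    also have "\<dots> = distr M borel U" by (rule distr_cong) auto
    finally show "distr (distr M (borel \<Otimes>\<^sub>M borel) (\<lambda>x. (Z x, U x))) (distr M borel U) snd = distr M borel U" .
qed

theorem lemma19:
  fixes M :: "'a measure"
    and Z :: "'a \<Rightarrow> real ^ 'd"
    and V :: "'a \<Rightarrow> real"
    and f :: "real ^ 'd \<Rightarrow> real"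
    and \<sigma>Z \<alpha> :: real
  assumes "prob_space M"
    and "distributed M lborel Z f"
    and "sub_gaussian M (\<lambda>x. norm (Z x)) (sqrt (real CARD('d)) * \<sigma>Z)"
    and "0 < \<alpha>" and "ereal \<alpha> < alpha_bar M Z"
    and "V \<in> borel_measurable M"
    and "distr M borel V = uniform_measure lborel {0..\<alpha>}"
    and "distr M (borel \<Otimes>\<^sub>M borel) (\<lambda>x. (Z x, V x)) = distr M borel Z \<Otimes>\<^sub>M distr M borel V"
  shows "W2 (distr M borel Z)
            (distr M borel (\<lambda>x. if norm (Z x) \<le> \<alpha> then Z x else (V x / norm (Z x)) *\<^sub>R Z x))
         \<le> ereal (sqrt 2 * (\<alpha> + sqrt (real CARD('d)) * \<sigma>Z)
                  * exp (- (\<alpha>\<^sup>2) / (2 * real CARD('d) * \<sigma>Z\<^sup>2)))"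
proof -
  interpret P: prob_space M by fact
  define s where "s = sqrt (real CARD('d)) * \<sigma>Z"
  define S where "S = subgauss_set M (\<lambda>x. norm (Z x))"
  have SZ: "S \<noteq> {}" "Inf S = s" using assms(3) by (simp_all add: sub_gaussian_def S_def s_def)
  have Zm[measurable]: "Z \<in> borel_measurable M"
    using distributed_measurable[OF assms(2)] by (simp add: measurable_cong_sets[OF refl sets_lborel])
  note Vm[measurable] = assms(6)
  define U where "U = (\<lambda>x. if norm (Z x) \<le> \<alpha> then Z x else (V x / norm (Z x)) *\<^sub>R Z x)"
  have Um[measurable]: "U \<in> borel_measurable M" unfolding U_def by measurable
  have Spos: "t \<in> S \<Longrightarrow> 0 < t" for t by (simp add: S_def subgauss_set_def)
  have up: "t' \<in> S" if "t \<in> S" "t \<le> t'" for t t'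
  proof -
    have t: "0 < t" using Spos that by auto
    have "(\<integral>\<^sup>+ x. ennreal (exp ((norm (Z x))\<^sup>2 / t'\<^sup>2)) \<partial>M) \<le> (\<integral>\<^sup>+ x. ennreal (exp ((norm (Z x))\<^sup>2 / t\<^sup>2)) \<partial>M)"
    proof (rule nn_integral_mono)
      fix x
      have "t\<^sup>2 \<le> t'\<^sup>2" using t that(2) by (simp add: power_mono)
      moreover have "0 < t'\<^sup>2 * t\<^sup>2" using t that(2) by simp
      ultimately have "(norm (Z x))\<^sup>2 / t'\<^sup>2 \<le> (norm (Z x))\<^sup>2 / t\<^sup>2"
        by (intro divide_left_mono) auto
      then show "ennreal (exp ((norm (Z x))\<^sup>2 / t'\<^sup>2)) \<le> ennreal (exp ((norm (Z x))\<^sup>2 / t\<^sup>2))"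
        by (intro ennreal_leI) simp
    qed
    also have "\<dots> \<le> 2" using that(1) by (simp add: S_def subgauss_set_def)
    finally show ?thesis using t that(2) by (simp add: S_def subgauss_set_def)
  qed
  have s0: "0 \<le> s" unfolding SZ(2)[symmetric] using SZ(1) Spos by (intro cInf_greatest) (auto intro: less_imp_le)
  have AEV: "AE x in M. V x \<in> {0..\<alpha>}"
  proof -
    have "emeasure (distr M borel V) (-{0..\<alpha>}) = 0" unfolding assms(7)
      by (subst emeasure_uniform_measure) auto
    then have N: "emeasure M (V -` (-{0..\<alpha>}) \<inter> space M) = 0"
      by (subst (asm) emeasure_distr) auto
    show ?thesis
      by (rule AE_I'[of "V -` (-{0..\<alpha>}) \<inter> space M"]) (use N in auto)
  qed
  define c where "c = (\<integral>\<^sup>+ x. ennreal ((norm (Z x - U x))\<^sup>2) \<partial>M)"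
  define G where "G = (\<lambda>t::real. 2 * (\<alpha> + t)\<^sup>2 * exp (-(\<alpha>\<^sup>2) / t\<^sup>2))"
  have bound: "c \<le> ennreal (G t)" if tS: "t \<in> S" for t
  proof -
    have t: "0 < t" using Spos tS by auto
    define K where "K = (\<alpha> + t)\<^sup>2 * exp (-(\<alpha>\<^sup>2) / t\<^sup>2)"
    have K0: "0 \<le> K" by (simp add: K_def)
    have I2: "(\<integral>\<^sup>+ x. ennreal (exp ((norm (Z x))\<^sup>2 / t\<^sup>2)) \<partial>M) \<le> 2"
      using tS by (simp add: S_def subgauss_set_def)
    have "c \<le> (\<integral>\<^sup>+ x. ennreal K * ennreal (exp ((norm (Z x))\<^sup>2 / t\<^sup>2)) \<partial>M)"
      unfolding c_def
    proof (rule nn_integral_mono_AE)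
      show "AE x in M. ennreal ((norm (Z x - U x))\<^sup>2) \<le> ennreal K * ennreal (exp ((norm (Z x))\<^sup>2 / t\<^sup>2))"
        using AEV
      proof eventually_elim
        case (elim x)
        have "(norm (Z x - U x))\<^sup>2 \<le> K * exp ((norm (Z x))\<^sup>2 / t\<^sup>2)"
        proof (cases "norm (Z x) \<le> \<alpha>")
          case True
          then show ?thesis using K0 by (simp add: U_def)
        next
          case False
          let ?n = "norm (Z x)"
          have np: "0 < ?n" using False assms(4) by linarith
          have "Z x - U x = (1 - V x / ?n) *\<^sub>R Z x" using False by (simp add: U_def algebra_simps)
          then have "norm (Z x - U x) = \<bar>1 - V x / ?n\<bar> * ?n" by simp
          also have "\<dots> = \<bar>?n - V x\<bar>" using np by (simp add: field_simps abs_mult[symmetric])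
          also have "\<dots> = ?n - V x" using elim False by auto
          finally have e: "norm (Z x - U x) = ?n - V x" .
          have "(norm (Z x - U x))\<^sup>2 \<le> ?n\<^sup>2" unfolding e using elim False by (intro power_mono) auto
          also have "\<dots> \<le> K * exp (?n\<^sup>2 / t\<^sup>2)" unfolding K_def
            using key_ineq[of \<alpha> ?n t] False assms(4) t by simp
          finally show ?thesis .
        qed
        then show ?case by (simp add: ennreal_mult[symmetric] K0)
      qed
    qed
    also have "\<dots> = ennreal K * (\<integral>\<^sup>+ x. ennreal (exp ((norm (Z x))\<^sup>2 / t\<^sup>2)) \<partial>M)"
      by (rule nn_integral_cmult) measurable
    also have "\<dots> \<le> ennreal K * 2" using I2 by (intro mult_left_mono) auto
    also have "\<dots> = ennreal (K * 2)" using K0 by (simp add: ennreal_mult)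
    also have "K * 2 = G t" unfolding G_def K_def by simp
    
    finally show ?thesis .
  qed
  obtain t0 where t0: "t0 \<in> S" using SZ(1) by auto
  have cfin: "c < \<top>" using bound[OF t0] by (simp add: top.not_eq_extremum le_less_trans)
  have cG: "enn2real c \<le> G s"
  proof (cases "s = 0")
    case True
    obtain t1 where t1: "t1 \<in> S" "t1 < \<alpha>/2" using cInf_lessD[OF SZ(1), of "\<alpha>/2"] SZ(2) True assms(4) by auto
    have h: "\<alpha>/2 \<in> S" using up[OF t1(1)] t1(2) by simp
    have "enn2real c \<le> G (\<alpha>/2)" using bound[OF h] by (intro enn2real_leI) (auto simp: G_def)
    also have "\<dots> \<le> G s"
    proof -
      have e4: "(5::real) \<le> exp 4" using exp_ge_add_one_self[of 4] by simp
      have "G (\<alpha>/2) = 2 * \<alpha>\<^sup>2 * (9/4) * exp (-4)" using assms(4)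
        by (simp add: G_def power2_eq_square field_simps)
      also have "\<dots> \<le> 2 * \<alpha>\<^sup>2" 
      proof -
        have "9 * \<alpha>\<^sup>2 \<le> 4 * (\<alpha>\<^sup>2 * 5)" by simp
        also have "\<dots> \<le> 4 * (\<alpha>\<^sup>2 * exp 4)" using e4 by (intro mult_left_mono) auto
        finally show ?thesis by (simp add: exp_minus field_simps)
      qed
      also have "\<dots> = G s" using True by (simp add: G_def)
      finally show ?thesis .
    qed
    finally show ?thesis .
  next
    case False
    then have sp: "0 < s" using s0 by simp
    have "isCont G s" unfolding G_def
      using sp by (intro continuous_intros) simp_all
    then have lim: "(G \<longlongrightarrow> G s) (at_right s)"
      unfolding isCont_def by (rule tendsto_mono[OF at_le[OF subset_UNIV]])
    have ev: "eventually (\<lambda>t. enn2real c \<le> G t) (at_right s)"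
      using eventually_at_right_less[of s]
    proof (rule eventually_mono)
      fix t assume "s < t"
      then obtain t1 where "t1 \<in> S" "t1 < t" using cInf_lessD[OF SZ(1), of t] SZ(2) by auto
      then have "t \<in> S" using up[of t1 t] by simp
      then show "enn2real c \<le> G t" using bound by (intro enn2real_leI) (auto simp: G_def)
    qed
    show ?thesis by (rule tendsto_lowerbound[OF lim ev]) simp
  qed
  define \<pi> where "\<pi> = distr M (borel \<Otimes>\<^sub>M borel) (\<lambda>x. (Z x, U x))"
  have ZUm[measurable]: "(\<lambda>x. (Z x, U x)) \<in> measurable M (borel \<Otimes>\<^sub>M borel)" by simp
  have coup: "\<pi> \<in> couplings (distr M borel Z) (distr M borel U)"
    unfolding \<pi>_def by (rule coupling_lemma[OF assms(1) Zm Um])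
  have int\<pi>: "(\<integral>\<^sup>+ p. ennreal ((norm (fst p - snd p))\<^sup>2) \<partial>\<pi>) = c"
    unfolding \<pi>_def c_def by (subst nn_integral_distr[OF ZUm]) simp_all
  have Wc: "W2_sq (distr M borel Z) (distr M borel U) \<le> c"
    unfolding W2_sq_def int\<pi>[symmetric] by (rule INF_lower[OF coup])
  have "W2_sq (distr M borel Z) (distr M borel U) < \<top>" using le_less_trans[OF Wc cfin] .
  then have Wfin: "W2_sq (distr M borel Z) (distr M borel U) \<noteq> \<top>" by simp
  have "enn2real (W2_sq (distr M borel Z) (distr M borel U)) \<le> G s"
    using order_trans[OF enn2real_mono[OF Wc cfin] cG] .
  then have W: "W2 (distr M borel Z) (distr M borel U) \<le> ereal (sqrt (G s))"
    unfolding W2_def using Wfin by simp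
  have sq: "sqrt (exp y) = exp (y / 2)" for y :: real
  proof (rule real_sqrt_unique)
    show "(exp (y / 2))\<^sup>2 = exp y" by (simp add: power2_eq_square flip: exp_add)
  qed simp
  have R: "sqrt (G s) = sqrt 2 * (\<alpha> + sqrt (real CARD('d)) * \<sigma>Z)
                  * exp (- (\<alpha>\<^sup>2) / (2 * real CARD('d) * \<sigma>Z\<^sup>2))"
  proof -
    have "sqrt (G s) = sqrt 2 * sqrt ((\<alpha> + s)\<^sup>2) * sqrt (exp (-(\<alpha>\<^sup>2) / s\<^sup>2))"
      unfolding G_def by (simp only: real_sqrt_mult)
    also have "sqrt ((\<alpha> + s)\<^sup>2) = \<alpha> + s" using s0 assms(4) by simp
    also have "sqrt (exp (-(\<alpha>\<^sup>2) / s\<^sup>2)) = exp (- (\<alpha>\<^sup>2) / (2 * s\<^sup>2))"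
      unfolding sq by simp
    also have "s\<^sup>2 = real CARD('d) * \<sigma>Z\<^sup>2" unfolding s_def by (simp add: power_mult_distrib)
    finally show ?thesis unfolding s_def by (simp add: mult.assoc)
  qed
  show ?thesis using W[unfolded U_def R] .
qed

end
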